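(* Let $H$ be a monoid, with identity $1_H$ and group of units $H^\times$. The following are equivalent: (a) $\mathcal{P}_{\mathrm{fin},1}(H)$ is UmF; (b) $H\setminus H^\times$ is an almost-breakable subsemigroup of $H$, the group of units $H^\times$ has order $\le 2$, $H$ is the trivial ideal extension of $H\setminus H^\times$ by $H^\times$, and $\mathcal{P}_{\mathrm{fin},1}\big((H\setminus H^\times)\cup\{1_H\}\big)$ is UmF.
   Context: For a monoid $H$, $\mathcal{P}_{\mathrm{fin},1}(H)$ denotes the set of all non-empty finite subsets of $H$ containing $1_H$; it is a monoid under setwise multiplication $XY=\{xy: x\in X, y\in Y\}$, with identity $\{1_H\}$ (the reduced finitary power monoid of $H$). Divisibility in a monoid $M$: $x\mid_M y$ iff $y\in MxM=\{uxv: u,v\in M\}$; $x,y$ are associated if each divides the other; $x$ properly divides $y$ if $x\mid_M y$ but $y\nmid_M x$. A unit-divisor is an element dividing $1_M$; otherwise it is a non-unit-divisor. An irreducible of $M$ is a non-unit-divisor $a$ such that $a\neq xy$ for all non-unit-divisors $x,y$ that both properly divide $a$. Factorizations: a factorization of $x\in M$ is a finite word $a_1\ast\cdots\ast a_n$ (possibly empty) in the free monoid over the set of irreducibles of $M$ with $a_1\cdots a_n=x$. For words $\mathfrak a,\mathfrak b$ over $M$, write $\mathfrak a\sqsubseteq\mathfrak b$ if $\mathfrak a$ is, up to replacing letters by associated elements, a subword (subsequence) of some permutation of $\mathfrak b$; $\mathfrak a,\mathfrak b$ are equivalent if $\mathfrak a\sqsubseteq\mathfrak b\sqsubseteq\mathfrak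 a$. A factorization $\mathfrak a$ of $x$ is minimal if there is no factorization $\mathfrak b$ of $x$ with $\mathfrak b\sqsubseteq\mathfrak a$ and $\mathfrak a\not\sqsubseteq\mathfrak b$. $M$ is factorable if every non-unit-divisor is a product of irreducibles, and $M$ is UmF if it is factorable and any two minimal factorizations of the same element are equivalent. A semigroup $S$ is almost-breakable if for all $x,y\in S$, $xy\in\{x,y\}$ or $yx\in\{x,y\}$. For disjoint semigroups $G$ and $K$, the trivial ideal extension of $K$ by $G$ is the semigroup on $G\cup K$ extending the operations of $G$ and $K$ by $xy=yx=y$ for all $x\in G$, $y\in K$; "$H$ is the trivial ideal extension of $H\setminus H^\times$ by $H^\times$" means the multiplication of $H$ coincides with this operation, i.e. $uy=yu=y$ for all $u\in H^\times$, $y\in H\setminus H^\times$. *)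

theory Defs
  imports "HOL-Algebra.Group" "HOL-Library.Sublist" "HOL-Library.Multiset"
begin

definition mdvd :: "('a, 'b) monoid_scheme \<Rightarrow> 'a \<Rightarrow> 'a \<Rightarrow> bool" where
  "mdvd M x y \<longleftrightarrow> (\<exists>u\<in>carrier M. \<exists>v\<in>carrier M. y = u \<otimes>\<^bsub>M\<^esub> x \<otimes>\<^bsub>M\<^esub> v)"

definition massoc :: "('a, 'b) monoid_scheme \<Rightarrow> 'a \<Rightarrow> 'a \<Rightarrow> bool" where
  "massoc M x y \<longleftrightarrow> mdvd M x y \<and> mdvd M y x"

definition proper_mdvd :: "('a, 'b) monoid_scheme \<Rightarrow> 'a \<Rightarrow> 'a \<Rightarrow> bool" where
  "proper_mdvd M x y \<longleftrightarrow> mdvd M x y \<and> \<not> mdvd M y x"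

definition unit_divisor :: "('a, 'b) monoid_scheme \<Rightarrow> 'a \<Rightarrow> bool" where
  "unit_divisor M x \<longleftrightarrow> mdvd M x \<one>\<^bsub>M\<^esub>"

definition irreducible_m :: "('a, 'b) monoid_scheme \<Rightarrow> 'a \<Rightarrow> bool" where
  "irreducible_m M a \<longleftrightarrow> a \<in> carrier M \<and> \<not> unit_divisor M a \<and>
     \<not> (\<exists>x\<in>carrier M. \<exists>y\<in>carrier M. \<not> unit_divisor M x \<and> \<not> unit_divisor M y \<and>
           proper_mdvd M x a \<and> proper_mdvd M y a \<and> a = x \<otimes>\<^bsub>M\<^esub> y)"

definition word_prod :: "('a, 'b) monoid_scheme \<Rightarrow> 'a list \<Rightarrow> 'a" where
  "word_prod M xs = foldr (\<lambda>a b. a \<otimes>\<^bsub>M\<^esub> b) xs \<one>\<^bsub>M\<^esub>"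

definition factorization :: "('a, 'b) monoid_scheme \<Rightarrow> 'a \<Rightarrow> 'a list \<Rightarrow> bool" where
  "factorization M x as \<longleftrightarrow> (\<forall>a\<in>set as. irreducible_m M a) \<and> word_prod M as = x"

definition word_le :: "('a, 'b) monoid_scheme \<Rightarrow> 'a list \<Rightarrow> 'a list \<Rightarrow> bool" where
  "word_le M as bs \<longleftrightarrow>
     (\<exists>ps cs. mset ps = mset bs \<and> subseq cs ps \<and> list_all2 (massoc M) as cs)"

definition word_equiv :: "('a, 'b) monoid_scheme \<Rightarrow> 'a list \<Rightarrow> 'a list \<Rightarrow> bool" where
  "word_equiv M as bs \<longleftrightarrow> word_le M as bs \<and> word_le M bs as"

definition minimal_factorization :: "('a, 'b) monoid_scheme \<Rightarrow> 'a \<Rightarrow> 'a list \<Rightarrow> bool" where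
  "minimal_factorization M x as \<longleftrightarrow> factorization M x as \<and>
     \<not> (\<exists>bs. factorization M x bs \<and> word_le M bs as \<and> \<not> word_le M as bs)"

definition factorable :: "('a, 'b) monoid_scheme \<Rightarrow> bool" where
  "factorable M \<longleftrightarrow> (\<forall>x\<in>carrier M. \<not> unit_divisor M x \<longrightarrow> (\<exists>as. factorization M x as))"

definition UmF :: "('a, 'b) monoid_scheme \<Rightarrow> bool" where
  "UmF M \<longleftrightarrow> factorable M \<and>
     (\<forall>x\<in>carrier M. \<forall>as bs. minimal_factorization M x as \<and> minimal_factorization M x bs
        \<longrightarrow> word_equiv M as bs)"

definition Pfin1 :: "('a, 'b) monoid_scheme \<Rightarrow> 'a set monoid" where
  "Pfin1 H = \<lparr> carrier = {X. finite X \<and> X \<noteq> {} \<and> X \<subseteq> carrier H \<and> \<one>\<^bsub>H\<^esub> \<in> X},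
              monoid.mult = (\<lambda>X Y. {x \<otimes>\<^bsub>H\<^esub> y | x y. x \<in> X \<and> y \<in> Y}),
              monoid.one = {\<one>\<^bsub>H\<^esub>} \<rparr>"

definition almost_breakable :: "('a, 'b) monoid_scheme \<Rightarrow> 'a set \<Rightarrow> bool" where
  "almost_breakable H S \<longleftrightarrow> (\<forall>x\<in>S. \<forall>y\<in>S. x \<otimes>\<^bsub>H\<^esub> y \<in> {x, y} \<or> y \<otimes>\<^bsub>H\<^esub> x \<in> {x, y})"

definition subsemigroup :: "('a, 'b) monoid_scheme \<Rightarrow> 'a set \<Rightarrow> bool" where
  "subsemigroup H S \<longleftrightarrow> S \<subseteq> carrier H \<and> (\<forall>x\<in>S. \<forall>y\<in>S. x \<otimes>\<^bsub>H\<^esub> y \<in> S)"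

definition trivial_ideal_ext :: "('a, 'b) monoid_scheme \<Rightarrow> bool" where
  "trivial_ideal_ext H \<longleftrightarrow> (\<forall>u\<in>Units H. \<forall>y\<in>carrier H - Units H.
      u \<otimes>\<^bsub>H\<^esub> y = y \<and> y \<otimes>\<^bsub>H\<^esub> u = y)"

end

theory Submission
  imports Defs
begin

lemma Pfin1_carrier: "X \<in> carrier (Pfin1 H) \<longleftrightarrow> finite X \<and> X \<noteq> {} \<and> X \<subseteq> carrier H \<and> \<one>\<^bsub>H\<^esub> \<in> X"
  by (simp add: Pfin1_def)
lemma Pfin1_mult_mem: "z \<in> X \<otimes>\<^bsub>Pfin1 H\<^esub> Y \<longleftrightarrow> (\<exists>x\<in>X. \<exists>y\<in>Y. z = x \<otimes>\<^bsub>H\<^esub> y)"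
  by (auto simp: Pfin1_def)
lemma Pfin1_mult_memI: "x \<in> X \<Longrightarrow> y \<in> Y \<Longrightarrow> x \<otimes>\<^bsub>H\<^esub> y \<in> X \<otimes>\<^bsub>Pfin1 H\<^esub> Y"
  by (auto simp: Pfin1_def)
lemma Pfin1_mult: "X \<otimes>\<^bsub>Pfin1 H\<^esub> Y = {x \<otimes>\<^bsub>H\<^esub> y | x y. x \<in> X \<and> y \<in> Y}"
  by (simp add: Pfin1_def)
lemma Pfin1_one: "\<one>\<^bsub>Pfin1 H\<^esub> = {\<one>\<^bsub>H\<^esub>}"
  by (simp add: Pfin1_def)

lemma Pfin1_closed:
  assumes "monoid H" "X \<in> carrier (Pfin1 H)" "Y \<in> carrier (Pfin1 H)"
  shows "X \<otimes>\<^bsub>Pfin1 H\<^esub> Y \<in> carrier (Pfin1 H)"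
proof -
  have "finite (X \<otimes>\<^bsub>Pfin1 H\<^esub> Y)" unfolding Pfin1_mult
    using assms by (intro finite_image_set2) (auto simp: Pfin1_carrier)
  moreover have "\<one>\<^bsub>H\<^esub> \<in> X \<otimes>\<^bsub>Pfin1 H\<^esub> Y" unfolding Pfin1_mult_mem
    using assms by (auto simp: Pfin1_carrier intro!: bexI[of _ "\<one>\<^bsub>H\<^esub>"])
  moreover have "X \<otimes>\<^bsub>Pfin1 H\<^esub> Y \<subseteq> carrier H" 
    using assms by (auto simp: Pfin1_carrier Pfin1_mult_mem monoid.m_closed subset_iff)
  ultimately show ?thesis by (auto simp: Pfin1_carrier)
qed

lemma Pfin1_assoc:
  assumes "monoid H" "X \<subseteq> carrier H" "Y \<subseteq> carrier H" "Z \<subseteq> carrier H"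
  shows "X \<otimes>\<^bsub>Pfin1 H\<^esub> Y \<otimes>\<^bsub>Pfin1 H\<^esub> Z = X \<otimes>\<^bsub>Pfin1 H\<^esub> (Y \<otimes>\<^bsub>Pfin1 H\<^esub> Z)"
proof (rule Set.set_eqI)
  fix w
  interpret monoid H by fact
  show "w \<in> X \<otimes>\<^bsub>Pfin1 H\<^esub> Y \<otimes>\<^bsub>Pfin1 H\<^esub> Z \<longleftrightarrow> w \<in> X \<otimes>\<^bsub>Pfin1 H\<^esub> (Y \<otimes>\<^bsub>Pfin1 H\<^esub> Z)"
  proof
    assume "w \<in> X \<otimes>\<^bsub>Pfin1 H\<^esub> Y \<otimes>\<^bsub>Pfin1 H\<^esub> Z"
    then obtain v z where "v \<in> X \<otimes>\<^bsub>Pfin1 H\<^esub> Y" "z \<in> Z" "w = v \<otimes>\<^bsub>H\<^esub> z"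
      unfolding Pfin1_mult_mem[of w] by blast
    moreover then obtain x y where "x \<in> X" "y \<in> Y" "v = x \<otimes>\<^bsub>H\<^esub> y"
      unfolding Pfin1_mult_mem[of v] by blast
    ultimately have "x \<in> X" "y \<in> Y" "z \<in> Z" "w = x \<otimes>\<^bsub>H\<^esub> y \<otimes>\<^bsub>H\<^esub> z" by auto
    moreover then have "w = x \<otimes>\<^bsub>H\<^esub> (y \<otimes>\<^bsub>H\<^esub> z)" using assms(2-4) m_assoc[of x y z] by (auto simp: subset_iff)
    ultimately show "w \<in> X \<otimes>\<^bsub>Pfin1 H\<^esub> (Y \<otimes>\<^bsub>Pfin1 H\<^esub> Z)"
      by (metis Pfin1_mult_memI)
  next
    assume "w \<in> X \<otimes>\<^bsub>Pfin1 H\<^esub> (Y \<otimes>\<^bsub>Pfin1 H\<^esub> Z)"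
    then obtain x v where "x \<in> X" "v \<in> Y \<otimes>\<^bsub>Pfin1 H\<^esub> Z" "w = x \<otimes>\<^bsub>H\<^esub> v"
      unfolding Pfin1_mult_mem[of w] by blast
    moreover then obtain y z where "y \<in> Y" "z \<in> Z" "v = y \<otimes>\<^bsub>H\<^esub> z"
      unfolding Pfin1_mult_mem[of v] by blast
    ultimately have "x \<in> X" "y \<in> Y" "z \<in> Z" "w = x \<otimes>\<^bsub>H\<^esub> (y \<otimes>\<^bsub>H\<^esub> z)" by auto
    moreover then have "w = x \<otimes>\<^bsub>H\<^esub> y \<otimes>\<^bsub>H\<^esub> z" using assms(2-4) m_assoc[of x y z] by (auto simp: subset_iff)
    ultimately show "w \<in> X \<otimes>\<^bsub>Pfin1 H\<^esub> Y \<otimes>\<^bsub>Pfin1 H\<^esub> Z"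
      by (metis Pfin1_mult_memI)
  qed
qed

lemma monoid_Pfin1:
  assumes "monoid H" shows "monoid (Pfin1 H)"
proof (rule monoidI)
    fix X Y assume "X \<in> carrier (Pfin1 H)" "Y \<in> carrier (Pfin1 H)"
    then show "X \<otimes>\<^bsub>Pfin1 H\<^esub> Y \<in> carrier (Pfin1 H)" using Pfin1_closed assms by blast
  next
    show "\<one>\<^bsub>Pfin1 H\<^esub> \<in> carrier (Pfin1 H)" by (simp add: Pfin1_one Pfin1_carrier assms monoid.one_closed)
  next
    fix X Y Z assume XYZ: "X \<in> carrier (Pfin1 H)" "Y \<in> carrier (Pfin1 H)" "Z \<in> carrier (Pfin1 H)"
    then show "X \<otimes>\<^bsub>Pfin1 H\<^esub> Y \<otimes>\<^bsub>Pfin1 H\<^esub> Z = X \<otimes>\<^bsub>Pfin1 H\<^esub> (Y \<otimes>\<^bsub>Pfin1 H\<^esub> Z)"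
      using Pfin1_assoc[OF assms] by (auto simp: Pfin1_carrier)
  next
    fix X assume "X \<in> carrier (Pfin1 H)"
    then have s: "X \<subseteq> carrier H" by (auto simp: Pfin1_carrier)
    show "\<one>\<^bsub>Pfin1 H\<^esub> \<otimes>\<^bsub>Pfin1 H\<^esub> X = X"
    proof (rule Set.set_eqI)
      fix w show "w \<in> \<one>\<^bsub>Pfin1 H\<^esub> \<otimes>\<^bsub>Pfin1 H\<^esub> X \<longleftrightarrow> w \<in> X"
        unfolding Pfin1_mult_mem Pfin1_one using s monoid.l_one[OF assms] by auto (metis subsetD)
    qed
    show "X \<otimes>\<^bsub>Pfin1 H\<^esub> \<one>\<^bsub>Pfin1 H\<^esub> = X"
    proof (rule Set.set_eqI)
      fix w show "w \<in> X \<otimes>\<^bsub>Pfin1 H\<^esub> \<one>\<^bsub>Pfin1 H\<^esub> \<longleftrightarrow> w \<in> X"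
        unfolding Pfin1_mult_mem Pfin1_one using s monoid.r_one[OF assms] by auto (metis subsetD)
    qed
qed


lemma subseq_mset: "subseq cs ps \<Longrightarrow> mset cs \<subseteq># mset ps"
proof (induction rule: list_emb.induct)
  case (list_emb_Nil ys) then show ?case by simp
next
  case (list_emb_Cons xs ys y)
  have "mset ys \<subseteq># add_mset y (mset ys)" by simp
  then show ?case using list_emb_Cons.IH by (simp add: subset_mset.order_trans)
next
  case (list_emb_Cons2 x y xs ys)
  then show ?case by (simp add: mset_subset_eq_add_mset_cancel)
qed

locale PF = monoid H for H :: "('a, 'b) monoid_scheme" (structure)
begin

abbreviation P where "P \<equiv> Pfin1 H"

lemma P_monoid: "monoid P" by (rule monoid_Pfin1) (rule monoid_axioms)

lemma PcD: "X \<in> carrier P \<Longrightarrow> X \<subseteq> carrier H \<and> \<one> \<in> X \<and> finite X"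
  by (simp add: Pfin1_carrier)

lemma P_one: "\<one>\<^bsub>P\<^esub> = {\<one>}" by (simp add: Pfin1_one)

lemma one_P: "{\<one>} \<in> carrier P" by (simp add: Pfin1_carrier)

lemma P_closed: "X \<in> carrier P \<Longrightarrow> Y \<in> carrier P \<Longrightarrow> X \<otimes>\<^bsub>P\<^esub> Y \<in> carrier P"
  using monoid.m_closed[OF P_monoid] by blast

lemma P_lone: "X \<in> carrier P \<Longrightarrow> {\<one>} \<otimes>\<^bsub>P\<^esub> X = X"
  using monoid.l_one[OF P_monoid, of X] by (simp add: P_one)
lemma P_rone: "X \<in> carrier P \<Longrightarrow> X \<otimes>\<^bsub>P\<^esub> {\<one>} = X"
  using monoid.r_one[OF P_monoid, of X] by (simp add: P_one)
lemma P_assoc: "X \<in> carrier P \<Longrightarrow> Y \<in> carrier P \<Longrightarrow> Z \<in> carrier P \<Longrightarrow>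
   X \<otimes>\<^bsub>P\<^esub> Y \<otimes>\<^bsub>P\<^esub> Z = X \<otimes>\<^bsub>P\<^esub> (Y \<otimes>\<^bsub>P\<^esub> Z)"
  using monoid.m_assoc[OF P_monoid] by blast

lemma sub_l: assumes "X \<in> carrier P" "Y \<in> carrier P" shows "X \<subseteq> X \<otimes>\<^bsub>P\<^esub> Y"
proof
  fix x assume "x \<in> X"
  then have "x \<otimes> \<one> \<in> X \<otimes>\<^bsub>P\<^esub> Y" using assms PcD by (intro Pfin1_mult_memI) auto
  moreover have "x \<in> carrier H" using assms PcD \<open>x \<in> X\<close> by blast
  ultimately show "x \<in> X \<otimes>\<^bsub>P\<^esub> Y" by simp
qed

lemma sub_r: assumes "X \<in> carrier P" "Y \<in> carrier P" shows "Y \<subseteq> X \<otimes>\<^bsub>P\<^esub> Y"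
proof
  fix x assume "x \<in> Y"
  then have "\<one> \<otimes> x \<in> X \<otimes>\<^bsub>P\<^esub> Y" using assms PcD by (intro Pfin1_mult_memI) auto
  moreover have "x \<in> carrier H" using assms PcD \<open>x \<in> Y\<close> by blast
  ultimately show "x \<in> X \<otimes>\<^bsub>P\<^esub> Y" by simp
qed

lemma mdvd_sub: assumes "X \<in> carrier P" "mdvd P X Y" shows "X \<subseteq> Y"
proof -
  obtain U V where UV: "U \<in> carrier P" "V \<in> carrier P" "Y = U \<otimes>\<^bsub>P\<^esub> X \<otimes>\<^bsub>P\<^esub> V"
    using assms(2) unfolding mdvd_def by blast
  have "X \<subseteq> U \<otimes>\<^bsub>P\<^esub> X" by (rule sub_r) (fact UV(1), fact assms(1))
  moreover have "U \<otimes>\<^bsub>P\<^esub> X \<subseteq> U \<otimes>\<^bsub>P\<^esub> X \<otimes>\<^bsub>P\<^esub> V"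
    by (rule sub_l) (rule P_closed, fact UV(1), fact assms(1), fact UV(2))
  ultimately show ?thesis using UV(3) by simp
qed

lemma mdvd_refl: assumes "X \<in> carrier P" shows "mdvd P X X"
proof -
  have "X = {\<one>} \<otimes>\<^bsub>P\<^esub> X \<otimes>\<^bsub>P\<^esub> {\<one>}" using assms by (simp add: P_lone P_rone)
  then show ?thesis unfolding mdvd_def using one_P by blast
qed

lemma massoc_eq: assumes "X \<in> carrier P" "Y \<in> carrier P" shows "massoc P X Y \<longleftrightarrow> X = Y"
proof
  assume "massoc P X Y"
  then have "X \<subseteq> Y" "Y \<subseteq> X" unfolding massoc_def using mdvd_sub assms by auto
  then show "X = Y" by (rule subset_antisym)
next
  assume "X = Y" then show "massoc P X Y" unfolding massoc_def using mdvd_refl assms by simp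
qed

lemma unit_div_iff: assumes "X \<in> carrier P" shows "unit_divisor P X \<longleftrightarrow> X = {\<one>}"
proof
  assume "unit_divisor P X"
  then have "X \<subseteq> {\<one>}" unfolding unit_divisor_def P_one using mdvd_sub assms by blast
  moreover have "\<one> \<in> X" using PcD assms by blast
  ultimately show "X = {\<one>}" by blast
next
  assume "X = {\<one>}" then show "unit_divisor P X" unfolding unit_divisor_def P_one using mdvd_refl one_P by simp
qed

lemma proper_l: assumes "x \<in> carrier P" "y \<in> carrier P"
  shows "proper_mdvd P x (x \<otimes>\<^bsub>P\<^esub> y) \<longleftrightarrow> x \<noteq> x \<otimes>\<^bsub>P\<^esub> y"
proof -
  have e: "x \<otimes>\<^bsub>P\<^esub> y = {\<one>} \<otimes>\<^bsub>P\<^esub> x \<otimes>\<^bsub>P\<^esub> y" using assms by (simp add: P_lone)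
  have d: "mdvd P x (x \<otimes>\<^bsub>P\<^esub> y)" unfolding mdvd_def using assms one_P e by blast
  have s: "x \<subseteq> x \<otimes>\<^bsub>P\<^esub> y" using sub_l assms by blast
  have c: "x \<otimes>\<^bsub>P\<^esub> y \<in> carrier P" using assms P_closed by blast
  show ?thesis
  proof
    assume "proper_mdvd P x (x \<otimes>\<^bsub>P\<^esub> y)"
    then show "x \<noteq> x \<otimes>\<^bsub>P\<^esub> y" unfolding proper_mdvd_def using mdvd_refl assms by auto
  next
    assume "x \<noteq> x \<otimes>\<^bsub>P\<^esub> y"
    moreover have "\<not> mdvd P (x \<otimes>\<^bsub>P\<^esub> y) x"
    proof
      assume "mdvd P (x \<otimes>\<^bsub>P\<^esub> y) x"
      then have "x \<otimes>\<^bsub>P\<^esub> y \<subseteq> x" using mdvd_sub c by blast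
      then show False using s \<open>x \<noteq> x \<otimes>\<^bsub>P\<^esub> y\<close> by blast
    qed
    ultimately show "proper_mdvd P x (x \<otimes>\<^bsub>P\<^esub> y)" unfolding proper_mdvd_def using d by blast
  qed
qed

lemma proper_r: assumes "x \<in> carrier P" "y \<in> carrier P"
  shows "proper_mdvd P y (x \<otimes>\<^bsub>P\<^esub> y) \<longleftrightarrow> y \<noteq> x \<otimes>\<^bsub>P\<^esub> y"
proof -
  have c: "x \<otimes>\<^bsub>P\<^esub> y \<in> carrier P" using assms P_closed by blast
  have e: "x \<otimes>\<^bsub>P\<^esub> y = x \<otimes>\<^bsub>P\<^esub> y \<otimes>\<^bsub>P\<^esub> {\<one>}" using c by (simp add: P_rone)
  have d: "mdvd P y (x \<otimes>\<^bsub>P\<^esub> y)" unfolding mdvd_def using assms one_P e by blast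
  have s: "y \<subseteq> x \<otimes>\<^bsub>P\<^esub> y" using sub_r assms by blast
  show ?thesis
  proof
    assume "proper_mdvd P y (x \<otimes>\<^bsub>P\<^esub> y)"
    then show "y \<noteq> x \<otimes>\<^bsub>P\<^esub> y" unfolding proper_mdvd_def using mdvd_refl assms by auto
  next
    assume "y \<noteq> x \<otimes>\<^bsub>P\<^esub> y"
    moreover have "\<not> mdvd P (x \<otimes>\<^bsub>P\<^esub> y) y"
    proof
      assume "mdvd P (x \<otimes>\<^bsub>P\<^esub> y) y"
      then have "x \<otimes>\<^bsub>P\<^esub> y \<subseteq> y" using mdvd_sub c by blast
      then show False using s \<open>y \<noteq> x \<otimes>\<^bsub>P\<^esub> y\<close> by blast
    qed
    ultimately show "proper_mdvd P y (x \<otimes>\<^bsub>P\<^esub> y)" unfolding proper_mdvd_def using d by blast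
  qed
qed

lemma irr_char: "irreducible_m P A \<longleftrightarrow> A \<in> carrier P \<and> A \<noteq> {\<one>} \<and>
   \<not> (\<exists>x\<in>carrier P. \<exists>y\<in>carrier P. x \<noteq> {\<one>} \<and> y \<noteq> {\<one>} \<and> x \<noteq> A \<and> y \<noteq> A \<and> A = x \<otimes>\<^bsub>P\<^esub> y)"
proof (cases "A \<in> carrier P")
  case False then show ?thesis by (simp add: irreducible_m_def)
next
  case True
  have "(\<exists>x\<in>carrier P. \<exists>y\<in>carrier P. \<not> unit_divisor P x \<and> \<not> unit_divisor P y \<and>
           proper_mdvd P x A \<and> proper_mdvd P y A \<and> A = x \<otimes>\<^bsub>P\<^esub> y) \<longleftrightarrow>
        (\<exists>x\<in>carrier P. \<exists>y\<in>carrier P. x \<noteq> {\<one>} \<and> y \<noteq> {\<one>} \<and> x \<noteq> A \<and> y \<noteq> A \<and> A = x \<otimes>\<^bsub>P\<^esub> y)"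
  proof
    assume "\<exists>x\<in>carrier P. \<exists>y\<in>carrier P. \<not> unit_divisor P x \<and> \<not> unit_divisor P y \<and>
           proper_mdvd P x A \<and> proper_mdvd P y A \<and> A = x \<otimes>\<^bsub>P\<^esub> y"
    then obtain x y where xy: "x\<in>carrier P" "y\<in>carrier P" "\<not> unit_divisor P x" "\<not> unit_divisor P y"
           "proper_mdvd P x A" "proper_mdvd P y A" "A = x \<otimes>\<^bsub>P\<^esub> y" by blast
    then have "x \<noteq> {\<one>}" "y \<noteq> {\<one>}" "x \<noteq> A" "y \<noteq> A"
      using unit_div_iff[of x] unit_div_iff[of y] proper_l[of x y] proper_r[of x y] by auto
    then show "\<exists>x\<in>carrier P. \<exists>y\<in>carrier P. x \<noteq> {\<one>} \<and> y \<noteq> {\<one>} \<and> x \<noteq> A \<and> y \<noteq> A \<and> A = x \<otimes>\<^bsub>P\<^esub> y"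
      using xy by blast
  next
    assume "\<exists>x\<in>carrier P. \<exists>y\<in>carrier P. x \<noteq> {\<one>} \<and> y \<noteq> {\<one>} \<and> x \<noteq> A \<and> y \<noteq> A \<and> A = x \<otimes>\<^bsub>P\<^esub> y"
    then obtain x y where xy: "x\<in>carrier P" "y\<in>carrier P" "x \<noteq> {\<one>}" "y \<noteq> {\<one>}" "x \<noteq> A" "y \<noteq> A"
      "A = x \<otimes>\<^bsub>P\<^esub> y" by blast
    then have "\<not> unit_divisor P x" "\<not> unit_divisor P y" "proper_mdvd P x A" "proper_mdvd P y A"
      using unit_div_iff[of x] unit_div_iff[of y] proper_l[of x y] proper_r[of x y] by auto
    then show "\<exists>x\<in>carrier P. \<exists>y\<in>carrier P. \<not> unit_divisor P x \<and> \<not> unit_divisor P y \<and>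
           proper_mdvd P x A \<and> proper_mdvd P y A \<and> A = x \<otimes>\<^bsub>P\<^esub> y"
      using xy by blast
  qed
  then show ?thesis unfolding irreducible_m_def using True unit_div_iff by auto
qed

lemma irr_carrier: "irreducible_m P A \<Longrightarrow> A \<in> carrier P"
  by (simp add: irreducible_m_def)

lemma pair_P: "x \<in> carrier H \<Longrightarrow> {\<one>, x} \<in> carrier P"
  by (simp add: Pfin1_carrier)

lemma irr_pair: assumes "x \<in> carrier H" "x \<noteq> \<one>" shows "irreducible_m P {\<one>, x}"
proof -
  have B: "B = {\<one>} \<or> B = {\<one>, x}" if "B \<in> carrier P" "B \<subseteq> {\<one>, x}" for B
    using that PcD by blast
  have "\<not> (\<exists>B\<in>carrier P. \<exists>C\<in>carrier P. B \<noteq> {\<one>} \<and> C \<noteq> {\<one>} \<and> B \<noteq> {\<one>, x} \<and> C \<noteq> {\<one>, x}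
      \<and> {\<one>, x} = B \<otimes>\<^bsub>P\<^esub> C)"
  proof
    assume "\<exists>B\<in>carrier P. \<exists>C\<in>carrier P. B \<noteq> {\<one>} \<and> C \<noteq> {\<one>} \<and> B \<noteq> {\<one>, x} \<and> C \<noteq> {\<one>, x}
      \<and> {\<one>, x} = B \<otimes>\<^bsub>P\<^esub> C"
    then obtain B C where BC: "B \<in> carrier P" "C \<in> carrier P" "B \<noteq> {\<one>}" "B \<noteq> {\<one>, x}"
      "{\<one>, x} = B \<otimes>\<^bsub>P\<^esub> C" by blast
    then have "B \<subseteq> {\<one>, x}" using sub_l by metis
    then show False using B BC by blast
  qed
  moreover have "{\<one>, x} \<noteq> {\<one>}" using assms by auto
  ultimately show ?thesis unfolding irr_char using pair_P assms by blast
qed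

lemma wp_Nil: "word_prod P [] = {\<one>}" by (simp add: word_prod_def P_one)
lemma wp_Cons: "word_prod P (a # as) = a \<otimes>\<^bsub>P\<^esub> word_prod P as" by (simp add: word_prod_def)

lemma wp_carrier: "set as \<subseteq> carrier P \<Longrightarrow> word_prod P as \<in> carrier P"
  by (induction as) (auto simp: wp_Nil wp_Cons one_P P_closed)

lemma wp_single: "a \<in> carrier P \<Longrightarrow> word_prod P [a] = a"
  by (simp add: wp_Cons wp_Nil P_rone)

lemma wp_two: "a \<in> carrier P \<Longrightarrow> b \<in> carrier P \<Longrightarrow> word_prod P [a, b] = a \<otimes>\<^bsub>P\<^esub> b"
  by (simp add: wp_Cons wp_Nil P_rone)

lemma wp_sub: "set as \<subseteq> carrier P \<Longrightarrow> a \<in> set as \<Longrightarrow> a \<subseteq> word_prod P as"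
proof (induction as)
  case Nil then show ?case by simp
next
  case (Cons b as)
  have c: "b \<in> carrier P" "word_prod P as \<in> carrier P" using Cons.prems wp_carrier by auto
  show ?case
  proof (cases "a = b")
    case True then show ?thesis using sub_l[OF c] by (simp add: wp_Cons)
  next
    case False
    then have "a \<subseteq> word_prod P as" using Cons by auto
    then show ?thesis using sub_r[OF c] by (auto simp: wp_Cons)
  qed
qed

lemma wp_append: "set as \<subseteq> carrier P \<Longrightarrow> set bs \<subseteq> carrier P \<Longrightarrow>
   word_prod P (as @ bs) = word_prod P as \<otimes>\<^bsub>P\<^esub> word_prod P bs"
  by (induction as) (auto simp: wp_Cons wp_Nil P_lone wp_carrier P_assoc)

lemma word_le_iff: assumes "set as \<subseteq> carrier P" "set bs \<subseteq> carrier P"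
  shows "word_le P as bs \<longleftrightarrow> mset as \<subseteq># mset bs"
proof
  assume "word_le P as bs"
  then obtain ps cs where pc: "mset ps = mset bs" "subseq cs ps" "list_all2 (massoc P) as cs"
    unfolding word_le_def by blast
  have "set cs \<subseteq> set bs" using subseq_mset[OF pc(2)] pc(1) by (metis set_mset_mono set_mset_mset)
  then have "set cs \<subseteq> carrier P" using assms(2) by blast
  have "list_all2 (=) as cs"
    using pc(3) by (rule list.rel_mono_strong) (use assms(1) \<open>set cs \<subseteq> carrier P\<close> massoc_eq in blast)
  then have "as = cs" by (simp add: list.rel_eq)
  then show "mset as \<subseteq># mset bs" using subseq_mset[OF pc(2)] pc(1) by simp
next
  assume a: "mset as \<subseteq># mset bs"
  obtain xs where xs: "mset xs = mset bs - mset as" using ex_mset by blast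
  have "mset (as @ xs) = mset bs" using a xs by simp
  moreover have "subseq as (as @ xs)" by (metis subseq_append' list_emb_Nil append_Nil2)
  moreover have "list_all2 (massoc P) as as" using assms(1)
    by (intro list.rel_refl_strong) (auto simp: massoc_eq)
  ultimately show "word_le P as bs" unfolding word_le_def by blast
qed

lemma word_equiv_iff: "set as \<subseteq> carrier P \<Longrightarrow> set bs \<subseteq> carrier P \<Longrightarrow>
   word_equiv P as bs \<longleftrightarrow> mset as = mset bs"
  unfolding word_equiv_def by (simp add: word_le_iff subset_mset.eq_iff)

lemma fact_carrier: "factorization P X as \<Longrightarrow> set as \<subseteq> carrier P"
  unfolding factorization_def using irr_carrier by blast

lemma factorable_P: "factorable P"
  unfolding factorable_def
proof (intro ballI impI)
  fix X assume X: "X \<in> carrier P" "\<not> unit_divisor P X"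
  then have "X \<noteq> {\<one>}" using unit_div_iff by blast
  have "X \<in> carrier P \<Longrightarrow> X \<noteq> {\<one>} \<Longrightarrow> \<exists>as. factorization P X as" for X
  proof (induction "card X" arbitrary: X rule: less_induct)
    case less
    show ?case
    proof (cases "irreducible_m P X")
      case True
      then have "factorization P X [X]" using wp_single less.prems unfolding factorization_def by simp
      then show ?thesis by blast
    next
      case False
      then have "\<not> (X \<in> carrier P \<and> X \<noteq> {\<one>} \<and> \<not> (\<exists>x\<in>carrier P. \<exists>y\<in>carrier P. x \<noteq> {\<one>} \<and> y \<noteq> {\<one>} \<and> x \<noteq> X \<and> y \<noteq> X \<and> X = x \<otimes>\<^bsub>P\<^esub> y))"
        by (simp only: irr_char not_False_eq_True)
      then have "\<exists>x\<in>carrier P. \<exists>y\<in>carrier P. x \<noteq> {\<one>} \<and> y \<noteq> {\<one>} \<and> x \<noteq> X \<and> y \<noteq> X \<and> X = x \<otimes>\<^bsub>P\<^esub> y"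
        using less.prems by simp
      then obtain x y where xy: "x \<in> carrier P" "y \<in> carrier P" "x \<noteq> {\<one>}" "y \<noteq> {\<one>}"
        "x \<noteq> X" "y \<noteq> X" "X = x \<otimes>\<^bsub>P\<^esub> y" by blast
      have "x \<subseteq> X" "y \<subseteq> X" using sub_l[OF xy(1,2)] sub_r[OF xy(1,2)] xy(7) by auto
      then have "x \<subset> X" "y \<subset> X" using xy(5,6) by auto
      moreover have "finite X" using PcD less.prems by blast
      ultimately have "card x < card X" "card y < card X" using psubset_card_mono by auto
      then obtain as bs where ab: "factorization P x as" "factorization P y bs"
        using less.hyps xy(1-4) by meson
      have "set as \<subseteq> carrier P" "set bs \<subseteq> carrier P" using ab fact_carrier by auto
      then have "word_prod P (as @ bs) = X" using ab xy(7) unfolding factorization_def by (simp add: wp_append)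
      then have "factorization P X (as @ bs)" using ab unfolding factorization_def by auto
      then show ?thesis by blast
    qed
  qed
  then show "\<exists>as. factorization P X as" using X \<open>X \<noteq> {\<one>}\<close> by blast
qed

lemma min_exists: "factorization P X bs \<Longrightarrow> \<exists>cs. minimal_factorization P X cs \<and> mset cs \<subseteq># mset bs"
proof (induction "size bs" arbitrary: bs rule: less_induct)
  case less
  show ?case
  proof (cases "minimal_factorization P X bs")
    case True then show ?thesis by blast
  next
    case False
    then obtain ds where ds: "factorization P X ds" "word_le P ds bs" "\<not> word_le P bs ds"
      using less.prems unfolding minimal_factorization_def by blast
    have cd: "set ds \<subseteq> carrier P" "set bs \<subseteq> carrier P" using fact_carrier ds(1) less.prems by auto
    have "mset ds \<subseteq># mset bs" "\<not> mset bs \<subseteq># mset ds"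
      using ds(2,3) word_le_iff[OF cd] word_le_iff[OF cd(2,1)] by auto
    then have lt: "mset ds \<subset># mset bs" by (simp add: subset_mset.less_le_not_le)
    have "size ds < size bs" using mset_subset_size[OF lt] by simp
    then obtain cs where cs: "minimal_factorization P X cs" "mset cs \<subseteq># mset ds"
      using less.hyps[OF _ ds(1)] by blast
    have "mset cs \<subseteq># mset bs" using subset_mset.order_trans[OF cs(2) \<open>mset ds \<subseteq># mset bs\<close>] .
    then show ?thesis using cs(1) by blast
  qed
qed

lemma min2: assumes "factorization P X [A, B]" "X \<noteq> A" "X \<noteq> B" "X \<noteq> {\<one>}"
  shows "minimal_factorization P X [A, B]"
proof -
  have c: "A \<in> carrier P" "B \<in> carrier P" using fact_carrier[OF assms(1)] by auto
  have F: "False" if "factorization P X bs" "mset bs \<subset># mset [A, B]" for bs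
  proof -
    have "size (mset bs) < size (mset [A, B])" using mset_subset_size[OF that(2)] .
    then have "length bs < 2" by simp
    then consider "bs = []" | d where "bs = [d]" by (cases bs) auto
    then show False
    proof cases
      case 1 then show ?thesis using that(1) assms(4) by (simp add: factorization_def wp_Nil)
    next
      case 2
      then have "{#d#} \<subseteq># mset [A, B]" using subset_mset.less_imp_le[OF that(2)] by simp
      then have "d \<in># mset [A, B]" by (simp only: single_subset_iff)
      then have "d = A \<or> d = B" by simp
      moreover have "word_prod P bs = d" using 2 c \<open>d = A \<or> d = B\<close> wp_single by auto
      ultimately show ?thesis using that(1) assms(2,3) unfolding factorization_def by auto
    qed
  qed
  show ?thesis unfolding minimal_factorization_def
  proof (intro conjI notI)
    show "factorization P X [A, B]" by fact
  next
    assume "\<exists>bs. factorization P X bs \<and> word_le P bs [A, B] \<and> \<not> word_le P [A, B] bs"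
    then obtain bs where bs: "factorization P X bs" "word_le P bs [A, B]" "\<not> word_le P [A, B] bs" by blast
    have cb: "set bs \<subseteq> carrier P" "set [A, B] \<subseteq> carrier P" using fact_carrier bs(1) c by auto
    have "mset bs \<subseteq># mset [A, B]" "\<not> mset [A, B] \<subseteq># mset bs"
      using bs(2,3) word_le_iff[OF cb] word_le_iff[OF cb(2,1)] by auto
    then have "mset bs \<subset># mset [A, B]" by (simp add: subset_mset.less_le_not_le)
    then show False using F bs(1) by blast
  qed
qed

lemma umf_contra: assumes "UmF P" "minimal_factorization P X as" "factorization P X bs"
  "a \<in> set as" "a \<notin> set bs" shows False
proof -
  obtain cs where cs: "minimal_factorization P X cs" "mset cs \<subseteq># mset bs" using min_exists assms(3) by blast
  have "set bs \<subseteq> carrier P" using assms(3) fact_carrier by blast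
  then have X: "X \<in> carrier P" using assms(3) wp_carrier unfolding factorization_def by blast
  have "word_equiv P as cs" using assms(1) cs(1) assms(2) X unfolding UmF_def by blast
  moreover have "set as \<subseteq> carrier P" "set cs \<subseteq> carrier P"
    using assms(2) cs(1) fact_carrier unfolding minimal_factorization_def by auto
  ultimately have "mset as = mset cs" by (simp add: word_equiv_iff)
  moreover have "a \<in># mset as" using assms(4) by simp
  ultimately have "a \<in># mset cs" by simp
  then have "a \<in># mset bs" using mset_subset_eqD[OF cs(2)] by blast
  then show False using assms(5) by simp
qed

end

locale PFS = PF H for H :: "('a, 'b) monoid_scheme" (structure) +
  fixes S assumes S_sub: "S \<subseteq> carrier H" and S_one: "\<one> \<in> S"
    and S_mult: "\<And>x y. x \<in> S \<Longrightarrow> y \<in> S \<Longrightarrow> x \<otimes> y \<in> S"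
begin

abbreviation "H' \<equiv> H\<lparr>carrier := S\<rparr>"
abbreviation "Q \<equiv> Pfin1 H'"

lemma H'_monoid: "monoid H'"
  by (rule monoidI) (use S_sub S_one S_mult m_assoc in \<open>auto simp: subset_iff\<close>)

sublocale Q: PF H' by (rule PF.intro) (rule H'_monoid)

lemma Q_mult: "monoid.mult Q = monoid.mult P" by (simp add: Pfin1_def)
lemma Q_mult': "X \<otimes>\<^bsub>Q\<^esub> Y = X \<otimes>\<^bsub>P\<^esub> Y" by (simp add: Q_mult)
lemma Q_one: "\<one>\<^bsub>H'\<^esub> = \<one>" by simp
lemma Q_carrier: "X \<in> carrier Q \<longleftrightarrow> X \<in> carrier P \<and> X \<subseteq> S"
  using S_sub by (auto simp: Pfin1_carrier)
lemma Q_wp: "word_prod Q = word_prod P"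
  by (rule ext) (simp add: word_prod_def Q_mult Pfin1_one)

lemma t_irr: assumes "A \<subseteq> S" shows "irreducible_m Q A \<longleftrightarrow> irreducible_m P A"
proof
  assume a: "irreducible_m Q A"
  then have A: "A \<in> carrier P" "A \<noteq> {\<one>}" using Q.irr_char Q_carrier by auto
  have "\<not> (\<exists>x\<in>carrier P. \<exists>y\<in>carrier P. x \<noteq> {\<one>} \<and> y \<noteq> {\<one>} \<and> x \<noteq> A \<and> y \<noteq> A \<and> A = x \<otimes>\<^bsub>P\<^esub> y)"
  proof
    assume "\<exists>x\<in>carrier P. \<exists>y\<in>carrier P. x \<noteq> {\<one>} \<and> y \<noteq> {\<one>} \<and> x \<noteq> A \<and> y \<noteq> A \<and> A = x \<otimes>\<^bsub>P\<^esub> y"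
    then obtain x y where xy: "x\<in>carrier P" "y\<in>carrier P" "x \<noteq> {\<one>}" "y \<noteq> {\<one>}" "x \<noteq> A" "y \<noteq> A"
      "A = x \<otimes>\<^bsub>P\<^esub> y" by blast
    have "x \<subseteq> A" "y \<subseteq> A" using sub_l[OF xy(1,2)] sub_r[OF xy(1,2)] xy(7) by auto
    then have "x \<in> carrier Q" "y \<in> carrier Q" using xy assms Q_carrier by auto
    then show False using a xy unfolding Q.irr_char Q_mult' Q_one by blast
  qed
  then show "irreducible_m P A" unfolding irr_char using A by blast
next
  assume a: "irreducible_m P A"
  then have A: "A \<in> carrier Q" "A \<noteq> {\<one>}" using irr_char Q_carrier assms by auto
  show "irreducible_m Q A" unfolding Q.irr_char Q_mult' Q_one
    using A a unfolding irr_char using Q_carrier by blast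
qed

lemma t_fact: assumes "X \<subseteq> S" shows "factorization Q X as \<longleftrightarrow> factorization P X as"
proof
  assume a: "factorization Q X as"
  have "irreducible_m P a" if "a \<in> set as" for a
  proof -
    have "irreducible_m Q a" using a that unfolding factorization_def by blast
    then have "a \<subseteq> S" using Q.irr_carrier Q_carrier by blast
    then show ?thesis using t_irr \<open>irreducible_m Q a\<close> by blast
  qed
  then show "factorization P X as" using a unfolding factorization_def Q_wp by blast
next
  assume a: "factorization P X as"
  have "irreducible_m Q a" if "a \<in> set as" for a
  proof -
    have "a \<subseteq> X" using wp_sub fact_carrier[OF a] that a unfolding factorization_def by blast
    then show ?thesis using t_irr assms a that unfolding factorization_def by blast
  qed
  then show "factorization Q X as" using a unfolding factorization_def Q_wp by blast
qed

lemma t_carrier: assumes "X \<subseteq> S" "factorization P X as" shows "set as \<subseteq> carrier Q"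
  using Q.fact_carrier t_fact assms by blast

lemma t_min: assumes "X \<subseteq> S" shows "minimal_factorization Q X as \<longleftrightarrow> minimal_factorization P X as"
proof -
  have "word_le Q bs as \<longleftrightarrow> word_le P bs as" "word_le Q as bs \<longleftrightarrow> word_le P as bs"
    if "factorization P X as" "factorization P X bs" for bs
  proof -
    have c: "set as \<subseteq> carrier Q" "set bs \<subseteq> carrier Q" using t_carrier assms that by auto
    then have c': "set as \<subseteq> carrier P" "set bs \<subseteq> carrier P" using Q_carrier by auto
    show "word_le Q bs as \<longleftrightarrow> word_le P bs as" "word_le Q as bs \<longleftrightarrow> word_le P as bs"
      using Q.word_le_iff word_le_iff c c' by auto
  qed
  then show ?thesis unfolding minimal_factorization_def using t_fact[OF assms] by meson
qed

lemma t_umf: assumes "UmF P" shows "UmF Q"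
  unfolding UmF_def
proof (intro conjI ballI allI impI)
  show "factorable Q" by (rule Q.factorable_P)
next
  fix X as bs assume X: "X \<in> carrier Q" and m: "minimal_factorization Q X as \<and> minimal_factorization Q X bs"
  have XS: "X \<subseteq> S" "X \<in> carrier P" using X Q_carrier by auto
  have m': "minimal_factorization P X as" "minimal_factorization P X bs" using m t_min XS by auto
  then have "word_equiv P as bs" using assms XS unfolding UmF_def by blast
  moreover have c: "set as \<subseteq> carrier Q" "set bs \<subseteq> carrier Q" using t_carrier XS m' unfolding minimal_factorization_def by auto
  moreover then have "set as \<subseteq> carrier P" "set bs \<subseteq> carrier P" using Q_carrier by auto
  ultimately show "word_equiv Q as bs" using word_equiv_iff Q.word_equiv_iff by auto
qed

end

context PF begin

lemma lmul: assumes "a \<in> carrier H" "Y \<subseteq> carrier H"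
  shows "{\<one>, a} \<otimes>\<^bsub>P\<^esub> Y = Y \<union> (\<lambda>y. a \<otimes> y) ` Y"
proof (rule Set.set_eqI)
  fix z
  show "z \<in> {\<one>, a} \<otimes>\<^bsub>P\<^esub> Y \<longleftrightarrow> z \<in> Y \<union> (\<lambda>y. a \<otimes> y) ` Y"
  proof
    assume "z \<in> {\<one>, a} \<otimes>\<^bsub>P\<^esub> Y"
    then obtain x y where "x \<in> {\<one>, a}" "y \<in> Y" "z = x \<otimes> y" unfolding Pfin1_mult_mem by blast
    then show "z \<in> Y \<union> (\<lambda>y. a \<otimes> y) ` Y" using assms by auto
  next
    assume z: "z \<in> Y \<union> (\<lambda>y. a \<otimes> y) ` Y"
    show "z \<in> {\<one>, a} \<otimes>\<^bsub>P\<^esub> Y"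
    proof (cases "z \<in> Y")
      case True
      then have "\<one> \<otimes> z \<in> {\<one>, a} \<otimes>\<^bsub>P\<^esub> Y" by (intro Pfin1_mult_memI) auto
      then show ?thesis using True assms by auto
    next
      case False
      then obtain y where "y \<in> Y" "z = a \<otimes> y" using z by auto
      then show ?thesis by (auto intro: Pfin1_mult_memI)
    qed
  qed
qed

lemma rmul: assumes "a \<in> carrier H" "Y \<subseteq> carrier H"
  shows "Y \<otimes>\<^bsub>P\<^esub> {\<one>, a} = Y \<union> (\<lambda>y. y \<otimes> a) ` Y"
proof (rule Set.set_eqI)
  fix z
  show "z \<in> Y \<otimes>\<^bsub>P\<^esub> {\<one>, a} \<longleftrightarrow> z \<in> Y \<union> (\<lambda>y. y \<otimes> a) ` Y"
  proof
    assume "z \<in> Y \<otimes>\<^bsub>P\<^esub> {\<one>, a}"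
    then obtain x y where "y \<in> {\<one>, a}" "x \<in> Y" "z = x \<otimes> y" unfolding Pfin1_mult_mem by blast
    then show "z \<in> Y \<union> (\<lambda>y. y \<otimes> a) ` Y" using assms by auto
  next
    assume z: "z \<in> Y \<union> (\<lambda>y. y \<otimes> a) ` Y"
    show "z \<in> Y \<otimes>\<^bsub>P\<^esub> {\<one>, a}"
    proof (cases "z \<in> Y")
      case True
      then have "z \<otimes> \<one> \<in> Y \<otimes>\<^bsub>P\<^esub> {\<one>, a}" by (intro Pfin1_mult_memI) auto
      then show ?thesis using True assms by auto
    next
      case False
      then obtain y where "y \<in> Y" "z = y \<otimes> a" using z by auto
      then show ?thesis by (auto intro: Pfin1_mult_memI)
    qed
  qed
qed

lemma pair_mult: "a \<in> carrier H \<Longrightarrow> b \<in> carrier H \<Longrightarrow> {\<one>, a} \<otimes>\<^bsub>P\<^esub> {\<one>, b} = {\<one>, a, b, a \<otimes> b}"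
  by (subst lmul) auto

lemma C0: assumes "UmF P" "a \<in> carrier H" "b \<in> carrier H" "a \<noteq> \<one>" "b \<noteq> \<one>"
  "{\<one>, a, b, a \<otimes> b} \<noteq> {\<one>, a}" "{\<one>, a, b, a \<otimes> b} \<noteq> {\<one>, b}"
  "factorization P {\<one>, a, b, a \<otimes> b} bs" "{\<one>, a} \<notin> set bs \<or> {\<one>, b} \<notin> set bs"
  shows False
proof -
  let ?X = "{\<one>, a, b, a \<otimes> b}"
  have f: "factorization P ?X [{\<one>, a}, {\<one>, b}]" unfolding factorization_def
    using irr_pair assms(2-5) wp_two pair_P pair_mult by auto
  have "?X \<noteq> {\<one>}" using assms(4) by auto
  then have m: "minimal_factorization P ?X [{\<one>, a}, {\<one>, b}]" using min2 f assms(6,7) by blast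
  show False using assms(9)
  proof
    assume "{\<one>, a} \<notin> set bs"
    then show False using umf_contra[OF assms(1) m assms(8), of "{\<one>, a}"] by simp
  next
    assume "{\<one>, b} \<notin> set bs"
    then show False using umf_contra[OF assms(1) m assms(8), of "{\<one>, b}"] by simp
  qed
qed

lemma idem: assumes U: "UmF P" and x: "x \<in> carrier H" shows "x \<otimes> x = \<one> \<or> x \<otimes> x = x"
proof (rule ccontr)
  assume "\<not> (x \<otimes> x = \<one> \<or> x \<otimes> x = x)"
  then have n: "x \<otimes> x \<noteq> \<one>" "x \<otimes> x \<noteq> x" by auto
  then have x1: "x \<noteq> \<one>" by auto
  let ?y = "x \<otimes> x"
  have y: "?y \<in> carrier H" using x by simp
  let ?X = "{\<one>, x, ?y, x \<otimes> ?y}"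
  have X1: "?X \<noteq> {\<one>, x}" using n by auto
  have X2: "?X \<noteq> {\<one>, ?y}" using n x1 by auto
  have "word_prod P [{\<one>, x}, {\<one>, x}, {\<one>, x}] = {\<one>, x} \<otimes>\<^bsub>P\<^esub> ({\<one>, x} \<otimes>\<^bsub>P\<^esub> {\<one>, x})"
    using pair_P[OF x] P_closed by (simp add: wp_Cons wp_Nil P_rone)
  also have "\<dots> = {\<one>, x} \<otimes>\<^bsub>P\<^esub> {\<one>, x, x, ?y}" using pair_mult[OF x x] by simp
  also have "\<dots> = {\<one>, x, x, ?y} \<union> (\<lambda>z. x \<otimes> z) ` {\<one>, x, x, ?y}" by (rule lmul) (use x in auto)
  also have "\<dots> = ?X" using x by auto
  finally have "factorization P ?X [{\<one>, x}, {\<one>, x}, {\<one>, x}]"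
    unfolding factorization_def using irr_pair[OF x x1] by simp
  moreover have "{\<one>, ?y} \<notin> set [{\<one>, x}, {\<one>, x}, {\<one>, x}]" using n by (auto simp: doubleton_eq_iff)
  ultimately show False using C0[OF U x y x1 n(1) X1 X2] by blast
qed

lemma unit_sq: assumes U: "UmF P" and u: "u \<in> Units H" shows "u \<otimes> u = \<one>"
proof -
  have uc: "u \<in> carrier H" using u Units_closed by blast
  have "u \<otimes> u = u \<Longrightarrow> u = \<one>"
  proof -
    assume e: "u \<otimes> u = u"
    have "inv u \<otimes> (u \<otimes> u) = inv u \<otimes> u" using e by simp
    then show "u = \<one>" using u uc by (simp add: m_assoc[symmetric] Units_l_inv Units_inv_closed)
  qed
  then show ?thesis using idem[OF U uc] by auto
qed

lemma units_two: assumes U: "UmF P" and u: "u \<in> Units H" and v: "v \<in> Units H"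
  and u1: "u \<noteq> \<one>" and v1: "v \<noteq> \<one>" shows "u = v"
proof (rule ccontr)
  assume uv: "u \<noteq> v"
  have uc: "u \<in> carrier H" and vc: "v \<in> carrier H" using u v Units_closed by auto
  have uu: "u \<otimes> u = \<one>" and vv: "v \<otimes> v = \<one>" using unit_sq U u v by auto
  let ?w = "u \<otimes> v"
  have wc: "?w \<in> carrier H" using uc vc by simp
  have uw: "u \<otimes> ?w = v" using uu uc vc by (simp add: m_assoc[symmetric])
  have w1: "?w \<noteq> \<one>" using uw uv uc by auto
  have wu: "?w \<noteq> u" using uw uu v1 by auto
  have wv: "?w \<noteq> v"
  proof
    assume "?w = v"
    then have "u \<otimes> v \<otimes> v = v \<otimes> v" by simp
    then show False using vv uc vc u1 by (simp add: m_assoc)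
  qed
  let ?X = "{\<one>, u, v, u \<otimes> v}"
  have X1: "?X \<noteq> {\<one>, u}" using uv v1 by auto
  have X2: "?X \<noteq> {\<one>, v}" using uv u1 by auto
  have "word_prod P [{\<one>, u}, {\<one>, ?w}] = {\<one>, u, ?w, u \<otimes> ?w}"
    using pair_P uc wc by (simp add: wp_two pair_mult)
  also have "\<dots> = ?X" using uw by auto
  finally have "factorization P ?X [{\<one>, u}, {\<one>, ?w}]"
    unfolding factorization_def using irr_pair uc wc u1 w1 by simp
  moreover have "{\<one>, v} \<notin> set [{\<one>, u}, {\<one>, ?w}]" using uv v1 wv by (auto simp: doubleton_eq_iff)
  ultimately show False using C0[OF U uc vc u1 v1 X1 X2] by blast
qed

lemma tie: assumes U: "UmF P" and u: "u \<in> Units H" and y: "y \<in> carrier H" "y \<notin> Units H"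
  shows "u \<otimes> y = y \<and> y \<otimes> u = y"
proof (cases "u = \<one>")
  case True then show ?thesis using y by simp
next
  case u1: False
  have uc: "u \<in> carrier H" using u Units_closed by blast
  have uu: "u \<otimes> u = \<one>" using unit_sq U u by auto
  have y1: "y \<noteq> \<one>" "y \<noteq> u" using y u by auto
  have uy: "u \<otimes> y = y"
  proof (rule ccontr)
    assume n: "u \<otimes> y \<noteq> y"
    let ?z = "u \<otimes> y"
    have zc: "?z \<in> carrier H" using uc y by simp
    have uz: "u \<otimes> ?z = y" using uu uc y by (simp add: m_assoc[symmetric])
    have z1: "?z \<noteq> \<one>"
    proof
      assume "?z = \<one>"
      then have "y = u" using uz uc by simp
      then show False using y1 by blast
    qed
    let ?X = "{\<one>, u, y, u \<otimes> y}"
    have X1: "?X \<noteq> {\<one>, u}" using y1 by auto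
    have X2: "?X \<noteq> {\<one>, y}" using y1 u1 by auto
    have "word_prod P [{\<one>, u}, {\<one>, ?z}] = {\<one>, u, ?z, u \<otimes> ?z}"
      using pair_P uc zc by (simp add: wp_two pair_mult)
    also have "\<dots> = ?X" using uz by auto
    finally have "factorization P ?X [{\<one>, u}, {\<one>, ?z}]"
      unfolding factorization_def using irr_pair uc zc u1 z1 by simp
    moreover have "{\<one>, y} \<notin> set [{\<one>, u}, {\<one>, ?z}]" using y1 n by (auto simp: doubleton_eq_iff)
    ultimately show False using C0[OF U uc y(1) u1 y1(1) X1 X2] by blast
  qed
  have yu: "y \<otimes> u = y"
  proof (rule ccontr)
    assume n: "y \<otimes> u \<noteq> y"
    let ?z = "y \<otimes> u"
    have zc: "?z \<in> carrier H" using uc y by simp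
    have zu: "?z \<otimes> u = y" using uu uc y by (simp add: m_assoc)
    have z1: "?z \<noteq> \<one>"
    proof
      assume "?z = \<one>"
      then have "y = u" using zu uc by simp
      then show False using y1 by blast
    qed
    let ?X = "{\<one>, y, u, y \<otimes> u}"
    have X1: "?X \<noteq> {\<one>, y}" using y1 u1 by auto
    have X2: "?X \<noteq> {\<one>, u}" using y1 by auto
    have "word_prod P [{\<one>, ?z}, {\<one>, u}] = {\<one>, ?z, u, ?z \<otimes> u}"
      using pair_P uc zc by (simp add: wp_two pair_mult)
    also have "\<dots> = ?X" using zu by auto
    finally have "factorization P ?X [{\<one>, ?z}, {\<one>, u}]"
      unfolding factorization_def using irr_pair uc zc u1 z1 by simp
    moreover have "{\<one>, y} \<notin> set [{\<one>, ?z}, {\<one>, u}]" using y1 n by (auto simp: doubleton_eq_iff)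
    ultimately show False using C0[OF U y(1) uc y1(1) u1 X1 X2] by blast
  qed
  show ?thesis using uy yu by blast
qed

end

context PF begin

lemma idemN: assumes U: "UmF P" and x: "x \<in> carrier H" "x \<notin> Units H" shows "x \<otimes> x = x"
proof -
  have "x \<otimes> x \<noteq> \<one>"
  proof
    assume "x \<otimes> x = \<one>"
    then have "x \<in> Units H" using x unfolding Units_def by blast
    then show False using x by blast
  qed
  then show ?thesis using idem[OF U x(1)] by blast
qed

lemma closedN: assumes U: "UmF P" and x: "x \<in> carrier H" "x \<notin> Units H" and y: "y \<in> carrier H" "y \<notin> Units H"
  shows "x \<otimes> y \<notin> Units H"
proof
  assume w: "x \<otimes> y \<in> Units H"
  have iw: "inv (x \<otimes> y) \<in> Units H" using w by simp
  have "inv (x \<otimes> y) \<otimes> x = x" using tie[OF U iw x] by blast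
  have iwc: "inv (x \<otimes> y) \<in> carrier H" using iw Units_closed by blast
  have "\<one> = inv (x \<otimes> y) \<otimes> (x \<otimes> y)" using Units_l_inv[OF w] by simp
  also have "\<dots> = inv (x \<otimes> y) \<otimes> x \<otimes> y" using iwc x y by (simp add: m_assoc)
  also have "\<dots> = x \<otimes> y" using \<open>inv (x \<otimes> y) \<otimes> x = x\<close> by simp
  finally have xy1: "x \<otimes> y = \<one>" by simp
  have "x \<otimes> x = x" using idemN U x by blast
  have "x = x \<otimes> (x \<otimes> y)" using xy1 x by simp
  also have "\<dots> = x \<otimes> x \<otimes> y" using x y by (simp add: m_assoc)
  also have "\<dots> = \<one>" using \<open>x \<otimes> x = x\<close> xy1 by simp
  finally have "x = \<one>" .
  then show False using x by simp
qed

lemma sub3: assumes "B \<in> carrier P" "B \<subseteq> {\<one>, x, y}" "B \<noteq> {\<one>}" "B \<noteq> {\<one>, x, y}"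
  shows "B = {\<one>, x} \<or> B = {\<one>, y}"
proof -
  have o: "\<one> \<in> B" using PcD assms(1) by blast
  show ?thesis
  proof (cases "x \<in> B")
    case True
    then have "y \<notin> B \<or> y = x \<or> y = \<one>" using o assms(2,4) by blast
    then show ?thesis using True o assms(2) by blast
  next
    case False
    then show ?thesis using o assms(2,3) by blast
  qed
qed

lemma abN: assumes U: "UmF P" and x: "x \<in> carrier H" "x \<notin> Units H" and y: "y \<in> carrier H" "y \<notin> Units H"
  shows "x \<otimes> y \<in> {x, y} \<or> y \<otimes> x \<in> {x, y}"
proof (rule ccontr)
  assume "\<not> (x \<otimes> y \<in> {x, y} \<or> y \<otimes> x \<in> {x, y})"
  then have n: "x \<otimes> y \<noteq> x" "x \<otimes> y \<noteq> y" "y \<otimes> x \<noteq> x" "y \<otimes> x \<noteq> y" by auto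
  have xx: "x \<otimes> x = x" and yy: "y \<otimes> y = y" using idemN U x y by auto
  have xy: "x \<noteq> y" using n xx by auto
  have x1: "x \<noteq> \<one>" and y1: "y \<noteq> \<one>" using x y by auto
  have n1: "x \<otimes> y \<noteq> \<one>" "y \<otimes> x \<noteq> \<one>" using closedN U x y by fastforce+
  let ?T = "{\<one>, x, y}"
  have Tc: "?T \<in> carrier P" using x y by (simp add: Pfin1_carrier)
  have nd: False if B: "B \<in> carrier P" "B \<noteq> {\<one>}" "B \<noteq> ?T" and C: "C \<in> carrier P" "C \<noteq> {\<one>}" "C \<noteq> ?T"
    and e: "?T = B \<otimes>\<^bsub>P\<^esub> C" for B C
  proof -
    have "B \<subseteq> ?T" "C \<subseteq> ?T" using sub_l[OF B(1) C(1)] sub_r[OF B(1) C(1)] e by auto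
    then have Bc: "B = {\<one>, x} \<or> B = {\<one>, y}" and Cc: "C = {\<one>, x} \<or> C = {\<one>, y}"
      using sub3 B C by auto
    have p1: "{\<one>, x} \<otimes>\<^bsub>P\<^esub> {\<one>, x} = {\<one>, x}" using pair_mult[OF x(1) x(1)] xx by auto
    have p2: "{\<one>, y} \<otimes>\<^bsub>P\<^esub> {\<one>, y} = {\<one>, y}" using pair_mult[OF y(1) y(1)] yy by auto
    have p3: "{\<one>, x} \<otimes>\<^bsub>P\<^esub> {\<one>, y} = {\<one>, x, y, x \<otimes> y}" using pair_mult[OF x(1) y(1)] by auto
    have p4: "{\<one>, y} \<otimes>\<^bsub>P\<^esub> {\<one>, x} = {\<one>, x, y, y \<otimes> x}" using pair_mult[OF y(1) x(1)] by auto
    have T1: "?T \<noteq> {\<one>, x}" "?T \<noteq> {\<one>, y}" using xy x1 y1 by (auto simp: doubleton_eq_iff)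
    have "x \<otimes> y \<notin> ?T" "y \<otimes> x \<notin> ?T" using n n1 by auto
    then have T2: "?T \<noteq> {\<one>, x, y, x \<otimes> y}" "?T \<noteq> {\<one>, x, y, y \<otimes> x}" by blast+
    show False using Bc Cc
    proof (elim disjE)
      assume "B = {\<one>, x}" "C = {\<one>, x}" then show False using e p1 T1 by simp
    next
      assume "B = {\<one>, x}" "C = {\<one>, y}" then show False using e p3 T2 by simp
    next
      assume "B = {\<one>, y}" "C = {\<one>, x}" then show False using e p4 T2 by simp
    next
      assume "B = {\<one>, y}" "C = {\<one>, y}" then show False using e p2 T1 by simp
    qed
  qed
  have Ti: "irreducible_m P ?T" unfolding irr_char using Tc x1 nd by blast
  let ?X = "{\<one>, x, y, x \<otimes> y}"
  have X1: "?X \<noteq> {\<one>, x}" using xy y1 by auto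
  have X2: "?X \<noteq> {\<one>, y}" using xy x1 by auto
  have "word_prod P [?T, {\<one>, y}] = ?T \<otimes>\<^bsub>P\<^esub> {\<one>, y}" using Tc pair_P[OF y(1)] by (simp add: wp_two)
  also have "\<dots> = ?T \<union> (\<lambda>z. z \<otimes> y) ` ?T" by (rule rmul) (use x y in auto)
  also have "\<dots> = ?X" using x y yy by auto
  finally have "factorization P ?X [?T, {\<one>, y}]"
    unfolding factorization_def using irr_pair[OF y(1) y1] Ti by simp
  moreover have "{\<one>, x} \<notin> set [?T, {\<one>, y}]" using xy x1 y1 by (auto simp: doubleton_eq_iff)
  ultimately show False using C0[OF U x(1) y(1) x1 y1 X1 X2] by blast
qed

lemma forward: assumes U: "UmF P"
  shows "subsemigroup H (carrier H - Units H) \<and>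
     almost_breakable H (carrier H - Units H) \<and>
     finite (Units H) \<and> card (Units H) \<le> 2 \<and>
     trivial_ideal_ext H \<and>
     UmF (Pfin1 (H\<lparr>carrier := (carrier H - Units H) \<union> {\<one>}\<rparr>))"
proof (intro conjI)
  show "subsemigroup H (carrier H - Units H)" unfolding subsemigroup_def
    using closedN[OF U] by auto
  show "almost_breakable H (carrier H - Units H)" unfolding almost_breakable_def
    using abN[OF U] by auto
  show "trivial_ideal_ext H" unfolding trivial_ideal_ext_def using tie[OF U] by auto
  have "finite (Units H) \<and> card (Units H) \<le> 2"
  proof (cases "\<exists>u\<in>Units H. u \<noteq> \<one>")
    case True
    then obtain u where u: "u \<in> Units H" "u \<noteq> \<one>" by blast
    have s: "Units H \<subseteq> {\<one>, u}" using units_two[OF U u(1) _ u(2)] by blast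
    then have "finite (Units H)" using finite_subset by blast
    moreover have "card (Units H) \<le> card {\<one>, u}" using s by (intro card_mono) auto
    moreover have "card {\<one>, u} = 2" using u by simp
    ultimately show ?thesis by simp
  next
    case False
    then have s: "Units H \<subseteq> {\<one>}" by blast
    then have "finite (Units H)" using finite_subset by blast
    moreover have "card (Units H) \<le> card {\<one>}" using s by (intro card_mono) auto
    ultimately show ?thesis by simp
  qed
  then show "finite (Units H)" "card (Units H) \<le> 2" by auto
  interpret S: PFS H "(carrier H - Units H) \<union> {\<one>}"
  proof unfold_locales
    show "carrier H - Units H \<union> {\<one>} \<subseteq> carrier H" by auto
    show "\<one> \<in> carrier H - Units H \<union> {\<one>}" by auto
    fix x y assume "x \<in> carrier H - Units H \<union> {\<one>}" "y \<in> carrier H - Units H \<union> {\<one>}"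
    then show "x \<otimes> y \<in> carrier H - Units H \<union> {\<one>}" using closedN[OF U, of x y] by auto
  qed
  show "UmF (Pfin1 (H\<lparr>carrier := (carrier H - Units H) \<union> {\<one>}\<rparr>))" using S.t_umf[OF U] .
qed

end

lemma filter_remove1_notP: "\<not> p x \<Longrightarrow> filter p (remove1 x xs) = filter p xs"
  by (induction xs) auto

locale PFU = PF H for H :: "('a, 'b) monoid_scheme" (structure) + fixes u
  assumes u_c: "u \<in> carrier H" and u_1: "u \<noteq> \<one>" and uu: "u \<otimes> u = \<one>"
  and u_tie: "\<And>y. y \<in> carrier H \<Longrightarrow> y \<noteq> \<one> \<Longrightarrow> y \<noteq> u \<Longrightarrow> u \<otimes> y = y \<and> y \<otimes> u = y"
  and N_closed: "\<And>x y. x \<in> carrier H \<Longrightarrow> y \<in> carrier H \<Longrightarrow> x \<noteq> \<one> \<Longrightarrow> x \<noteq> u \<Longrightarrow> y \<noteq> \<one> \<Longrightarrow> y \<noteq> u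
      \<Longrightarrow> x \<otimes> y \<noteq> u"
begin

lemma Smul: assumes "x \<in> carrier H" "y \<in> carrier H" "x \<noteq> u" "y \<noteq> u" shows "x \<otimes> y \<noteq> u"
proof (cases "x = \<one>")
  case True then show ?thesis using assms by simp
next
  case False
  show ?thesis
  proof (cases "y = \<one>")
    case True then show ?thesis using assms by simp
  next
    case False then show ?thesis using N_closed assms \<open>x \<noteq> \<one>\<close> by blast
  qed
qed

sublocale PFS H "carrier H - {u}"
  by unfold_locales (use u_1 Smul in auto)

abbreviation "U1 \<equiv> {\<one>, u}"

lemma PmemI: "x \<in> X \<Longrightarrow> y \<in> Y \<Longrightarrow> x \<otimes> y \<in> X \<otimes>\<^bsub>P\<^esub> Y"
  by (rule Pfin1_mult_memI)

lemma hom1: assumes A: "A \<in> carrier P" and B: "B \<in> carrier P"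
  shows "(A \<otimes>\<^bsub>P\<^esub> B) - {u} = (A - {u}) \<otimes>\<^bsub>P\<^esub> (B - {u})"
proof (rule Set.set_eqI)
  fix z
  have Ac: "A \<subseteq> carrier H" and Bc: "B \<subseteq> carrier H" and o: "\<one> \<in> A" "\<one> \<in> B" using A B PcD by auto
  show "z \<in> (A \<otimes>\<^bsub>P\<^esub> B) - {u} \<longleftrightarrow> z \<in> (A - {u}) \<otimes>\<^bsub>P\<^esub> (B - {u})"
  proof
    assume zz: "z \<in> (A \<otimes>\<^bsub>P\<^esub> B) - {u}"
    then have "z \<in> A \<otimes>\<^bsub>P\<^esub> B" "z \<noteq> u" by auto
    then obtain a b where ab: "a \<in> A" "b \<in> B" "z = a \<otimes> b" "z \<noteq> u" unfolding Pfin1_mult_mem by blast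
    have ac: "a \<in> carrier H" "b \<in> carrier H" using ab Ac Bc by auto
    have o': "\<one> \<in> A - {u}" "\<one> \<in> B - {u}" using o u_1 by auto
    show "z \<in> (A - {u}) \<otimes>\<^bsub>P\<^esub> (B - {u})"
    proof (cases "a = u")
      case True
      show ?thesis
      proof (cases "b = u")
        case True
        then have "z = \<one> \<otimes> \<one>" using ab \<open>a = u\<close> uu by simp
        then show ?thesis using PmemI[OF o'(1) o'(2)] by simp
      next
        case False
        then have "b \<noteq> \<one>" using ab \<open>a = u\<close> u_c by auto
        then have "z = \<one> \<otimes> b" using ab \<open>a = u\<close> u_tie[of b] ac False by simp
        moreover have "b \<in> B - {u}" using ab(2) False by blast
        ultimately show ?thesis using PmemI[OF o'(1)] by simp
      qed
    next
      case False
      show ?thesis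
      proof (cases "b = u")
        case True
        then have "a \<noteq> \<one>" using ab u_c by auto
        then have "z = a \<otimes> \<one>" using ab \<open>b = u\<close> u_tie[of a] ac False by simp
        moreover have "a \<in> A - {u}" using ab(1) \<open>a \<noteq> u\<close> by blast
        ultimately show ?thesis using PmemI[OF _ o'(2)] by simp
      next
        case False
        then have "a \<in> A - {u}" "b \<in> B - {u}" using ab \<open>a \<noteq> u\<close> by auto
        then show ?thesis using PmemI ab(3) by simp
      qed
    qed
  next
    assume "z \<in> (A - {u}) \<otimes>\<^bsub>P\<^esub> (B - {u})"
    then obtain a b where ab: "a \<in> A - {u}" "b \<in> B - {u}" "z = a \<otimes> b" unfolding Pfin1_mult_mem by blast
    have "a \<in> carrier H" "b \<in> carrier H" using ab Ac Bc by auto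
    then have "z \<noteq> u" using Smul ab by blast
    moreover have "z \<in> A \<otimes>\<^bsub>P\<^esub> B" using ab PmemI by simp
    ultimately show "z \<in> (A \<otimes>\<^bsub>P\<^esub> B) - {u}" by blast
  qed
qed

lemma hom2: assumes A: "A \<in> carrier P" and B: "B \<in> carrier P"
  shows "u \<in> A \<otimes>\<^bsub>P\<^esub> B \<longleftrightarrow> u \<in> A \<or> u \<in> B"
proof
  have Ac: "A \<subseteq> carrier H" and Bc: "B \<subseteq> carrier H" and o: "\<one> \<in> A" "\<one> \<in> B" using A B PcD by auto
  assume "u \<in> A \<otimes>\<^bsub>P\<^esub> B"
  then obtain a b where ab: "a \<in> A" "b \<in> B" "u = a \<otimes> b" unfolding Pfin1_mult_mem by blast
  have "a \<in> carrier H" "b \<in> carrier H" using ab Ac Bc by auto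
  then show "u \<in> A \<or> u \<in> B" using Smul ab by metis
next
  have o: "\<one> \<in> A" "\<one> \<in> B" using A B PcD by auto
  assume "u \<in> A \<or> u \<in> B"
  then show "u \<in> A \<otimes>\<^bsub>P\<^esub> B"
  proof
    assume "u \<in> A"
    then have "u \<otimes> \<one> \<in> A \<otimes>\<^bsub>P\<^esub> B" using o PmemI by simp
    then show ?thesis using u_c by simp
  next
    assume "u \<in> B"
    then have "\<one> \<otimes> u \<in> A \<otimes>\<^bsub>P\<^esub> B" using o PmemI by simp
    then show ?thesis using u_c by simp
  qed
qed

lemma U1_mult: assumes Z: "Z \<in> carrier P" "u \<notin> Z" shows "U1 \<otimes>\<^bsub>P\<^esub> Z = insert u Z"
proof -
  have Zc: "Z \<subseteq> carrier H" "\<one> \<in> Z" using Z PcD by auto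
  have "U1 \<otimes>\<^bsub>P\<^esub> Z = Z \<union> (\<lambda>z. u \<otimes> z) ` Z" by (rule lmul) (use u_c Zc in auto)
  also have "(\<lambda>z. u \<otimes> z) ` Z \<subseteq> insert u Z"
  proof
    fix w assume "w \<in> (\<lambda>z. u \<otimes> z) ` Z"
    then obtain z where z: "z \<in> Z" "w = u \<otimes> z" by blast
    show "w \<in> insert u Z"
    proof (cases "z = \<one>")
      case True then show ?thesis using z u_c by simp
    next
      case False
      have "z \<in> carrier H" "z \<noteq> u" using z Zc Z(2) by auto
      then have "u \<otimes> z = z" using u_tie False by blast
      then show ?thesis using z by simp
    qed
  qed
  then have "Z \<union> (\<lambda>z. u \<otimes> z) ` Z = insert u Z" using Zc u_c by force
  finally show ?thesis .
qed

lemma split_u: assumes A: "A \<in> carrier P" "u \<in> A" shows "A = (A - {u}) \<otimes>\<^bsub>P\<^esub> U1"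
proof -
  let ?A = "A - {u}"
  have Ac: "?A \<subseteq> carrier H" "\<one> \<in> ?A" using A PcD u_1 by auto
  have "?A \<otimes>\<^bsub>P\<^esub> U1 = ?A \<union> (\<lambda>z. z \<otimes> u) ` ?A" by (rule rmul) (use u_c Ac in auto)
  also have "(\<lambda>z. z \<otimes> u) ` ?A \<subseteq> A"
  proof
    fix w assume "w \<in> (\<lambda>z. z \<otimes> u) ` ?A"
    then obtain z where z: "z \<in> ?A" "w = z \<otimes> u" by blast
    show "w \<in> A"
    proof (cases "z = \<one>")
      case True then show ?thesis using z u_c A by simp
    next
      case False then show ?thesis using z u_tie[of z] Ac by auto
    qed
  qed
  then have "?A \<union> (\<lambda>z. z \<otimes> u) ` ?A = A" using Ac u_c A by force
  finally show ?thesis by simp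
qed

lemma A'_carrier: "A \<in> carrier P \<Longrightarrow> A - {u} \<in> carrier P"
  using u_1 by (auto simp: Pfin1_carrier)

lemma irr_u: assumes "irreducible_m P A" "u \<in> A" shows "A = U1"
proof (rule ccontr)
  assume ne: "A \<noteq> U1"
  have A: "A \<in> carrier P" using assms irr_carrier by blast
  have o: "\<one> \<in> A" using A PcD by blast
  have c1: "A - {u} \<in> carrier P" using A'_carrier A by blast
  have c2: "U1 \<in> carrier P" using pair_P u_c by blast
  have n1: "A - {u} \<noteq> {\<one>}" using ne assms(2) o by auto
  have n2: "A - {u} \<noteq> A" using assms(2) by auto
  have n3: "U1 \<noteq> {\<one>}" using u_1 by (auto simp: doubleton_eq_iff)
  have eq: "A = (A - {u}) \<otimes>\<^bsub>P\<^esub> U1" using split_u A assms(2) by blast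
  have "\<exists>x\<in>carrier P. \<exists>y\<in>carrier P. x \<noteq> {\<one>} \<and> y \<noteq> {\<one>} \<and> x \<noteq> A \<and> y \<noteq> A \<and> A = x \<otimes>\<^bsub>P\<^esub> y"
    apply (rule bexI[OF _ c1], rule bexI[OF _ c2])
    using n1 n2 n3 ne eq by simp
  moreover have "\<not> (\<exists>x\<in>carrier P. \<exists>y\<in>carrier P. x \<noteq> {\<one>} \<and> y \<noteq> {\<one>} \<and> x \<noteq> A \<and> y \<noteq> A \<and> A = x \<otimes>\<^bsub>P\<^esub> y)"
    using assms(1) unfolding irr_char by (elim conjE)
  ultimately show False by contradiction
qed

lemma irr_nu: assumes "irreducible_m P A" "u \<notin> A" shows "irreducible_m Q A"
proof -
  have "A \<in> carrier P" using assms irr_carrier by blast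
  then have "A \<subseteq> carrier H" using PcD by blast
  then have "A \<subseteq> carrier H - {u}" using assms(2) by blast
  then show ?thesis using t_irr assms(1) by blast
qed

lemma irr_U1: "irreducible_m P U1" using irr_pair u_c u_1 by blast

lemma wp_u: "set as \<subseteq> carrier P \<Longrightarrow> u \<in> word_prod P as \<longleftrightarrow> (\<exists>a\<in>set as. u \<in> a)"
proof (induction as)
  case Nil then show ?case using u_1 by (simp add: wp_Nil)
next
  case (Cons a as)
  then have "a \<in> carrier P" "word_prod P as \<in> carrier P" using wp_carrier by auto
  then show ?case using Cons by (simp add: wp_Cons hom2)
qed

lemma wp_minus: "\<forall>a\<in>set as. irreducible_m P a \<Longrightarrow>
    word_prod P as - {u} = word_prod P (filter (\<lambda>a. u \<notin> a) as)"
proof (induction as)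
  case Nil then show ?case using u_1 by (simp add: wp_Nil)
next
  case (Cons a as)
  have c: "a \<in> carrier P" "set as \<subseteq> carrier P" using Cons.prems irr_carrier by auto
  then have w: "word_prod P as \<in> carrier P" using wp_carrier by blast
  have IH: "word_prod P as - {u} = word_prod P (filter (\<lambda>a. u \<notin> a) as)" using Cons by simp
  have fc: "set (filter (\<lambda>a. u \<notin> a) as) \<subseteq> carrier P" using c by auto
  have "word_prod P (a # as) - {u} = (a - {u}) \<otimes>\<^bsub>P\<^esub> (word_prod P as - {u})"
    using hom1[OF c(1) w] by (simp add: wp_Cons)
  also have "\<dots> = (a - {u}) \<otimes>\<^bsub>P\<^esub> word_prod P (filter (\<lambda>a. u \<notin> a) as)" using IH by simp
  also have "\<dots> = word_prod P (filter (\<lambda>a. u \<notin> a) (a # as))"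
  proof (cases "u \<in> a")
    case True
    then have "a = U1" using irr_u Cons.prems by auto
    then have "a - {u} = {\<one>}" using u_1 by auto
    then show ?thesis using True P_lone wp_carrier[OF fc] by simp
  next
    case False
    then show ?thesis by (simp add: wp_Cons)
  qed
  finally show ?case .
qed

lemma mset_split: assumes "\<forall>a\<in>set as. irreducible_m P a"
  shows "mset as = mset (filter (\<lambda>a. u \<notin> a) as) + replicate_mset (count (mset as) U1) U1"
proof -
  have q: "{#a \<in># mset as. \<not> u \<notin> a#} = {#a \<in># mset as. a = U1#}"
  proof (rule filter_mset_cong0)
    fix a assume "a \<in># mset as"
    then have "irreducible_m P a" using assms by simp
    then show "(\<not> u \<notin> a) \<longleftrightarrow> a = U1" using irr_u by auto
  qed
  have "mset as = {#a \<in># mset as. u \<notin> a#} + {#a \<in># mset as. \<not> u \<notin> a#}" by (rule multiset_partition)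
  also have "\<dots> = mset (filter (\<lambda>a. u \<notin> a) as) + replicate_mset (count (mset as) U1) U1"
    unfolding q filter_eq_replicate_mset by simp
  finally show ?thesis .
qed

end

context PFU begin

lemma no_smaller: assumes m: "minimal_factorization P X as" and f: "factorization P X ds"
  and lt: "mset ds \<subset># mset as" shows False
proof -
  have "set ds \<subseteq> carrier P" "set as \<subseteq> carrier P" using f m fact_carrier unfolding minimal_factorization_def by auto
  then have "word_le P ds as" "\<not> word_le P as ds" using lt word_le_iff
    by (auto simp: subset_mset.less_le_not_le)
  then show False using m f unfolding minimal_factorization_def by blast
qed

lemma min_struct: assumes m: "minimal_factorization P X as"
  shows "minimal_factorization Q (X - {u}) (filter (\<lambda>a. u \<notin> a) as) \<and>
         count (mset as) U1 = (if u \<in> X then 1 else 0)"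
proof -
  let ?f = "filter (\<lambda>a. u \<notin> a) as"
  let ?k = "count (mset as) U1"
  have fa: "factorization P X as" using m unfolding minimal_factorization_def by blast
  then have irr: "\<forall>a\<in>set as. irreducible_m P a" and Xeq: "word_prod P as = X"
    unfolding factorization_def by auto
  have ca: "set as \<subseteq> carrier P" using fa fact_carrier by blast
  have Xc: "X \<in> carrier P" using wp_carrier[OF ca] Xeq by simp
  have XS: "X - {u} \<subseteq> carrier H - {u}" using Xc PcD by blast
  have fP: "factorization P (X - {u}) ?f"
    unfolding factorization_def using irr wp_minus[OF irr] Xeq by auto
  define F where "F = mset ?f"
  have spl: "mset as = F + replicate_mset ?k U1" using mset_split[OF irr] unfolding F_def .
  have uX: "u \<in> X \<longleftrightarrow> U1 \<in> set as"
  proof -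
    have "u \<in> X \<longleftrightarrow> (\<exists>a\<in>set as. u \<in> a)" using wp_u[OF ca] Xeq by simp
    also have "\<dots> \<longleftrightarrow> U1 \<in> set as"
    proof
      assume "\<exists>a\<in>set as. u \<in> a"
      then obtain a where a: "a \<in> set as" "u \<in> a" by blast
      then have "a = U1" using irr irr_u by blast
      then show "U1 \<in> set as" using a by simp
    next
      assume "U1 \<in> set as" then show "\<exists>a\<in>set as. u \<in> a" by blast
    qed
    finally show ?thesis .
  qed
  have k: "?k = (if u \<in> X then 1 else 0)"
  proof (cases "u \<in> X")
    case False
    then have "U1 \<notin># mset as" using uX by simp
    then show ?thesis using False by (simp add: not_in_iff)
  next
    case True
    then have k1: "?k \<ge> 1" using uX by (simp add: Suc_le_eq)
    have "\<not> ?k \<ge> 2"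
    proof
      assume k2: "?k \<ge> 2"
      let ?d = "remove1 U1 as"
      have sd: "set ?d \<subseteq> set as" by (rule set_remove1_subset)
      have irrd: "\<forall>a\<in>set ?d. irreducible_m P a" using irr sd by blast
      have cd: "set ?d \<subseteq> carrier P" by (rule subset_trans[OF sd ca])
      have e0: "filter (\<lambda>a. u \<notin> a) ?d = ?f" by (rule filter_remove1_notP) simp
      have fw: "word_prod P ?f = X - {u}" using fP unfolding factorization_def by blast
      have e1: "word_prod P ?d - {u} = X - {u}" using wp_minus[OF irrd] e0 fw by simp
      have "count (mset ?d) U1 = ?k - 1" by simp
      then have "count (mset ?d) U1 > 0" using k2 by linarith
      then have "U1 \<in># mset ?d" by (simp only: count_greater_zero_iff)
      then have "U1 \<in> set ?d" by (simp only: set_mset_mset)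
      then have "u \<in> word_prod P ?d" using wp_u[OF cd] by blast
      then have "word_prod P ?d = insert u (word_prod P ?d - {u})" by blast
      also have "\<dots> = insert u (X - {u})" using e1 by simp
      also have "\<dots> = X" using True by blast
      finally have "word_prod P ?d = X" .
      then have fd: "factorization P X ?d" unfolding factorization_def using irrd by blast
      have "U1 \<in># mset as" using True uX by simp
      then have "mset ?d \<subset># mset as" by (simp add: mset_subset_diff_self)
      then show False using no_smaller[OF m fd] by blast
    qed
    then have "?k = 1" using k1 by linarith
    then show ?thesis using True by simp
  qed
  have mP: "minimal_factorization P (X - {u}) ?f"
    unfolding minimal_factorization_def
  proof (intro conjI notI)
    show "factorization P (X - {u}) ?f" by fact
  next
    assume "\<exists>cs. factorization P (X - {u}) cs \<and> word_le P cs ?f \<and> \<not> word_le P ?f cs"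
    then obtain cs where cs: "factorization P (X - {u}) cs" "word_le P cs ?f" "\<not> word_le P ?f cs" by blast
    have cc: "set cs \<subseteq> carrier P" "set ?f \<subseteq> carrier P" using fact_carrier[OF cs(1)] fact_carrier[OF fP] by auto
    have lt: "mset cs \<subset># F" unfolding F_def using cs(2,3) word_le_iff[OF cc] word_le_iff[OF cc(2,1)]
      by (auto simp: subset_mset.less_le_not_le)
    have wc: "word_prod P cs = X - {u}" and irc: "\<forall>a\<in>set cs. irreducible_m P a"
      using cs(1) unfolding factorization_def by auto
    show False
    proof (cases "u \<in> X")
      case True
      have "word_prod P (U1 # cs) = U1 \<otimes>\<^bsub>P\<^esub> (X - {u})" using wc by (simp add: wp_Cons)
      also have "\<dots> = insert u (X - {u})" by (rule U1_mult) (use A'_carrier Xc in auto)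
      also have "\<dots> = X" using True by blast
      finally have fd: "factorization P X (U1 # cs)" unfolding factorization_def using irc irr_U1 by auto
      have "mset (U1 # cs) \<subset># mset as" using spl k True lt by simp
      then show False using no_smaller[OF m fd] by blast
    next
      case False
      then have fd: "factorization P X cs" using wc irc unfolding factorization_def by auto
      have "mset cs \<subset># mset as" using spl k False lt by simp
      then show False using no_smaller[OF m fd] by blast
    qed
  qed
  have "minimal_factorization Q (X - {u}) ?f" using t_min[OF XS] mP by blast
  then show ?thesis using k by blast
qed

lemma backward: assumes UQ: "UmF Q" shows "UmF P"
  unfolding UmF_def
proof (intro conjI ballI allI impI)
  show "factorable P" by (rule factorable_P)
next
  fix X as bs assume X: "X \<in> carrier P" and m: "minimal_factorization P X as \<and> minimal_factorization P X bs"
  let ?fa = "filter (\<lambda>a. u \<notin> a) as" and ?fb = "filter (\<lambda>a. u \<notin> a) bs"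
  have sa: "minimal_factorization Q (X - {u}) ?fa" "count (mset as) U1 = (if u \<in> X then 1 else 0)"
    using min_struct m by auto
  have sb: "minimal_factorization Q (X - {u}) ?fb" "count (mset bs) U1 = (if u \<in> X then 1 else 0)"
    using min_struct m by auto
  have "X - {u} \<in> carrier Q" using A'_carrier[OF X] Q_carrier X PcD by blast
  then have "word_equiv Q ?fa ?fb" using UQ sa sb unfolding UmF_def by blast
  moreover have "factorization Q (X - {u}) ?fa" "factorization Q (X - {u}) ?fb"
    using sa(1) sb(1) unfolding minimal_factorization_def by blast+
  then have "set ?fa \<subseteq> carrier Q" "set ?fb \<subseteq> carrier Q"
    using Q.fact_carrier by blast+
  ultimately have e: "mset ?fa = mset ?fb" using Q.word_equiv_iff by blast
  have irra: "\<forall>a\<in>set as. irreducible_m P a" and irrb: "\<forall>a\<in>set bs. irreducible_m P a"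
    using m unfolding minimal_factorization_def factorization_def by auto
  have "mset as = mset bs" using mset_split[OF irra] mset_split[OF irrb] e sa(2) sb(2) by simp
  moreover have "set as \<subseteq> carrier P" "set bs \<subseteq> carrier P" using irra irrb irr_carrier by auto
  ultimately show "word_equiv P as bs" using word_equiv_iff by blast
qed

end

theorem theorem3p6:
  fixes H :: "('a, 'b) monoid_scheme"
  assumes "monoid H"
  shows "UmF (Pfin1 H) \<longleftrightarrow>
    (subsemigroup H (carrier H - Units H) \<and>
     almost_breakable H (carrier H - Units H) \<and>
     finite (Units H) \<and> card (Units H) \<le> 2 \<and>
     trivial_ideal_ext H \<and>
     UmF (Pfin1 (H\<lparr>carrier := (carrier H - Units H) \<union> {\<one>\<^bsub>H\<^esub>}\<rparr>)))"
proof -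
  interpret PF H by (rule PF.intro) (rule assms)
  show ?thesis
  proof
    assume "UmF (Pfin1 H)"
    then show "subsemigroup H (carrier H - Units H) \<and>
     almost_breakable H (carrier H - Units H) \<and>
     finite (Units H) \<and> card (Units H) \<le> 2 \<and>
     trivial_ideal_ext H \<and>
     UmF (Pfin1 (H\<lparr>carrier := (carrier H - Units H) \<union> {\<one>\<^bsub>H\<^esub>}\<rparr>))" by (rule forward)
  next
    assume b: "subsemigroup H (carrier H - Units H) \<and>
     almost_breakable H (carrier H - Units H) \<and>
     finite (Units H) \<and> card (Units H) \<le> 2 \<and>
     trivial_ideal_ext H \<and>
     UmF (Pfin1 (H\<lparr>carrier := (carrier H - Units H) \<union> {\<one>\<^bsub>H\<^esub>}\<rparr>))"
    then have ss: "subsemigroup H (carrier H - Units H)" and fin: "finite (Units H)"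
      and c2: "card (Units H) \<le> 2" and tie: "trivial_ideal_ext H"
      and UQ: "UmF (Pfin1 (H\<lparr>carrier := (carrier H - Units H) \<union> {\<one>\<^bsub>H\<^esub>}\<rparr>))" by auto
    show "UmF (Pfin1 H)"
    proof (cases "\<exists>u\<in>Units H. u \<noteq> \<one>\<^bsub>H\<^esub>")
      case False
      then have "(carrier H - Units H) \<union> {\<one>\<^bsub>H\<^esub>} = carrier H" by auto
      then show ?thesis using UQ by simp
    next
      case True
      then obtain u where u: "u \<in> Units H" "u \<noteq> \<one>\<^bsub>H\<^esub>" by blast
      have uc: "u \<in> carrier H" using u by (simp add: Units_closed)
      have one_u: "\<one>\<^bsub>H\<^esub> \<in> Units H" by simp
      have U2: "v = u" if v: "v \<in> Units H" "v \<noteq> \<one>\<^bsub>H\<^esub>" for v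
      proof (rule ccontr)
        assume "v \<noteq> u"
        then have "card {\<one>\<^bsub>H\<^esub>, u, v} = 3" using u v by simp
        moreover have "card {\<one>\<^bsub>H\<^esub>, u, v} \<le> card (Units H)" using u v one_u fin by (intro card_mono) auto
        ultimately show False using c2 by simp
      qed
      have UH: "Units H = {\<one>\<^bsub>H\<^esub>, u}" using U2 u one_u by blast
      have iu: "inv\<^bsub>H\<^esub> u \<in> Units H" using u by simp
      have "inv\<^bsub>H\<^esub> u \<noteq> \<one>\<^bsub>H\<^esub>"
      proof
        assume "inv\<^bsub>H\<^esub> u = \<one>\<^bsub>H\<^esub>"
        then have "u \<otimes>\<^bsub>H\<^esub> \<one>\<^bsub>H\<^esub> = \<one>\<^bsub>H\<^esub>" using Units_r_inv[OF u(1)] by simp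
        then show False using uc u(2) by simp
      qed
      then have "inv\<^bsub>H\<^esub> u = u" using U2 iu by blast
      then have uu: "u \<otimes>\<^bsub>H\<^esub> u = \<one>\<^bsub>H\<^esub>" using Units_r_inv[OF u(1)] by simp
      have nu: "y \<notin> Units H" if "y \<in> carrier H" "y \<noteq> \<one>\<^bsub>H\<^esub>" "y \<noteq> u" for y using that UH by auto
      interpret PFU H u
      proof unfold_locales
        show "u \<in> carrier H" by fact
        show "u \<noteq> \<one>\<^bsub>H\<^esub>" by fact
        show "u \<otimes>\<^bsub>H\<^esub> u = \<one>\<^bsub>H\<^esub>" by fact
      next
        fix y assume "y \<in> carrier H" "y \<noteq> \<one>\<^bsub>H\<^esub>" "y \<noteq> u"
        then show "u \<otimes>\<^bsub>H\<^esub> y = y \<and> y \<otimes>\<^bsub>H\<^esub> u = y" using tie nu u(1) unfolding trivial_ideal_ext_def by blast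
      next
        fix x y assume xy: "x \<in> carrier H" "y \<in> carrier H" "x \<noteq> \<one>\<^bsub>H\<^esub>" "x \<noteq> u" "y \<noteq> \<one>\<^bsub>H\<^esub>" "y \<noteq> u"
        then have "x \<in> carrier H - Units H" "y \<in> carrier H - Units H" using nu by auto
        then have "x \<otimes>\<^bsub>H\<^esub> y \<in> carrier H - Units H" using ss unfolding subsemigroup_def by blast
        then show "x \<otimes>\<^bsub>H\<^esub> y \<noteq> u" using u(1) by blast
      qed
      have "(carrier H - Units H) \<union> {\<one>\<^bsub>H\<^esub>} = carrier H - {u}" using UH u(2) by auto
      then have "UmF (Pfin1 (H\<lparr>carrier := carrier H - {u}\<rparr>))" using UQ by simp
      then show ?thesis by (rule backward)
    qed
  qed
qed

end
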